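(* Let $n,m$ be positive integers. Let $\boldsymbol\alpha,\boldsymbol\beta\in\mathbb{R}^m_{\geq 0}$ with $\sum_i\alpha_i=\sum_j\beta_j=1/n$, and let $\mathbf C_0,\dots,\mathbf C_{n-1}\in\mathbb{R}^{m\times m}_{\geq 0}$, writing $C_{ijk}$ for the $(i,j)$-entry of $\mathbf C_k$. Consider the problem $$\text{(P)}\quad \min_{\mathbf T_0,\dots,\mathbf T_{n-1}\in\mathbb{R}^{m\times m}_{\geq 0}}\ \sum_{k=0}^{n-1}\langle \mathbf C_k,\mathbf T_k\rangle\quad\text{s.t.}\quad \sum_{k=0}^{n-1}\mathbf T_k\mathbf 1_m=\boldsymbol\alpha,\ \ \sum_{k=0}^{n-1}\mathbf T_k^\top\mathbf 1_m=\boldsymbol\beta,$$ and the small problem $$\text{(S)}\quad \min_{\mathbf S\in\mathbb{R}^{m\times m}_{\geq 0}}\ \langle\mathbf G,\mathbf S\rangle\quad\text{s.t.}\quad \mathbf S\mathbf 1_m=\boldsymbol\alpha,\ \ \mathbf S^\top\mathbf 1_m=\boldsymbol\beta,$$ where $G_{ij}:=\min_{0\le k\le n-1}C_{ijk}$. Let $\mathbf S^*$ be an optimal solution of (S). Define $\mathbf T^*_0,\dots,\mathbf T^*_{n-1}$ by $T^*_{ijk}=S^*_{ij}$ if $k=\min\big(\operatorname{argmin}_{0\le k'\le n-1}C_{ijk'}\big)$ and $T^*_{ijk}=0$ otherwise, where $T^*_{ijk}$ denotes the $(i,j)$-entry of $\mathbf T^*_k$. Then $(\mathbf T^*_k)_{k=0,\dots,n-1}$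 is an optimal solution of (P), and the optimal objective value of (P) equals that of (S).
   Context: $\langle\mathbf X,\mathbf Y\rangle=\sum_{i,j}X_{ij}Y_{ij}$ is the Frobenius inner product and $\mathbf 1_m$ is the all-ones vector in $\mathbb{R}^m$. $\operatorname{argmin}_{k'}C_{ijk'}$ is the set of indices attaining the minimum, and the smallest such index is taken. *)

theory Defs
  imports Complex_Main
begin

text \<open>A matrix is nat => nat => real, a vector nat => real,
  a family of n matrices is nat => nat => nat => real with T i j k the (i,j)-entry of T_k.\<close>

definition feasP :: "nat \<Rightarrow> nat \<Rightarrow> (nat \<Rightarrow> real) \<Rightarrow> (nat \<Rightarrow> real)
    \<Rightarrow> (nat \<Rightarrow> nat \<Rightarrow> nat \<Rightarrow> real) \<Rightarrow> bool" where
  "feasP n m \<alpha> \<beta> T \<longleftrightarrow>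
     (\<forall>i<m. \<forall>j<m. \<forall>k<n. T i j k \<ge> 0) \<and>
     (\<forall>i<m. (\<Sum>k<n. \<Sum>j<m. T i j k) = \<alpha> i) \<and>
     (\<forall>j<m. (\<Sum>k<n. \<Sum>i<m. T i j k) = \<beta> j)"

definition objP :: "nat \<Rightarrow> nat \<Rightarrow> (nat \<Rightarrow> nat \<Rightarrow> nat \<Rightarrow> real)
    \<Rightarrow> (nat \<Rightarrow> nat \<Rightarrow> nat \<Rightarrow> real) \<Rightarrow> real" where
  "objP n m C T = (\<Sum>k<n. \<Sum>i<m. \<Sum>j<m. C i j k * T i j k)"

definition feasS :: "nat \<Rightarrow> (nat \<Rightarrow> real) \<Rightarrow> (nat \<Rightarrow> real)
    \<Rightarrow> (nat \<Rightarrow> nat \<Rightarrow> real) \<Rightarrow> bool" where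
  "feasS m \<alpha> \<beta> S \<longleftrightarrow>
     (\<forall>i<m. \<forall>j<m. S i j \<ge> 0) \<and>
     (\<forall>i<m. (\<Sum>j<m. S i j) = \<alpha> i) \<and>
     (\<forall>j<m. (\<Sum>i<m. S i j) = \<beta> j)"

definition objS :: "nat \<Rightarrow> (nat \<Rightarrow> nat \<Rightarrow> real) \<Rightarrow> (nat \<Rightarrow> nat \<Rightarrow> real) \<Rightarrow> real" where
  "objS m G S = (\<Sum>i<m. \<Sum>j<m. G i j * S i j)"

definition optP :: "nat \<Rightarrow> nat \<Rightarrow> (nat \<Rightarrow> real) \<Rightarrow> (nat \<Rightarrow> real)
    \<Rightarrow> (nat \<Rightarrow> nat \<Rightarrow> nat \<Rightarrow> real) \<Rightarrow> (nat \<Rightarrow> nat \<Rightarrow> nat \<Rightarrow> real) \<Rightarrow> bool" where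
  "optP n m \<alpha> \<beta> C T \<longleftrightarrow> feasP n m \<alpha> \<beta> T \<and>
     (\<forall>T'. feasP n m \<alpha> \<beta> T' \<longrightarrow> objP n m C T \<le> objP n m C T')"

definition optS :: "nat \<Rightarrow> (nat \<Rightarrow> real) \<Rightarrow> (nat \<Rightarrow> real)
    \<Rightarrow> (nat \<Rightarrow> nat \<Rightarrow> real) \<Rightarrow> (nat \<Rightarrow> nat \<Rightarrow> real) \<Rightarrow> bool" where
  "optS m \<alpha> \<beta> G S \<longleftrightarrow> feasS m \<alpha> \<beta> S \<and>
     (\<forall>S'. feasS m \<alpha> \<beta> S' \<longrightarrow> objS m G S \<le> objS m G S')"

definition Gmin :: "nat \<Rightarrow> (nat \<Rightarrow> nat \<Rightarrow> nat \<Rightarrow> real) \<Rightarrow> nat \<Rightarrow> nat \<Rightarrow> real" where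
  "Gmin n C i j = Min ((\<lambda>k. C i j k) ` {..<n})"

definition kstar :: "nat \<Rightarrow> (nat \<Rightarrow> nat \<Rightarrow> nat \<Rightarrow> real) \<Rightarrow> nat \<Rightarrow> nat \<Rightarrow> nat" where
  "kstar n C i j = (LEAST k. k < n \<and> (\<forall>k'<n. C i j k \<le> C i j k'))"

definition Tstar :: "nat \<Rightarrow> (nat \<Rightarrow> nat \<Rightarrow> nat \<Rightarrow> real) \<Rightarrow> (nat \<Rightarrow> nat \<Rightarrow> real)
    \<Rightarrow> nat \<Rightarrow> nat \<Rightarrow> nat \<Rightarrow> real" where
  "Tstar n C S i j k = (if k = kstar n C i j then S i j else 0)"

end

theory Submission
  imports Defs
begin

lemma kstar_props:
  assumes "n > 0"
  shows "kstar n C i j < n \<and> C i j (kstar n C i j) = Gmin n C i j"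
proof -
  have fin: "finite ((\<lambda>k. C i j k) ` {..<n})" "(\<lambda>k. C i j k) ` {..<n} \<noteq> {}" using assms by auto
  obtain k0 where k0: "k0 < n" "C i j k0 = Gmin n C i j"
    using Min_in[OF fin] unfolding Gmin_def by auto
  have P: "k0 < n \<and> (\<forall>k'<n. C i j k0 \<le> C i j k')"
    using k0 fin unfolding Gmin_def by auto
  have Q: "kstar n C i j < n \<and> (\<forall>k'<n. C i j (kstar n C i j) \<le> C i j k')"
    unfolding kstar_def by (rule LeastI[of _ k0], rule P)
  hence "C i j (kstar n C i j) \<le> Gmin n C i j" using k0 by auto
  moreover have "Gmin n C i j \<le> C i j (kstar n C i j)"
    unfolding Gmin_def using Q fin by auto
  ultimately show ?thesis using Q by auto
qed

lemma Gmin_le: "k < n \<Longrightarrow> Gmin n C i j \<le> C i j k"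
  unfolding Gmin_def by auto

lemma sum_Tstar:
  assumes "n > 0"
  shows "(\<Sum>k<n. Tstar n C S i j k) = S i j"
proof -
  have "kstar n C i j \<in> {..<n}" using kstar_props[OF assms] by auto
  thus ?thesis unfolding Tstar_def by (simp add: sum.delta')
qed

lemma sumC_Tstar:
  assumes "n > 0"
  shows "(\<Sum>k<n. C i j k * Tstar n C S i j k) = Gmin n C i j * S i j"
proof -
  have "kstar n C i j \<in> {..<n}" using kstar_props[OF assms] by auto
  hence "(\<Sum>k<n. C i j k * Tstar n C S i j k) = C i j (kstar n C i j) * S i j"
    unfolding Tstar_def by (simp add: if_distrib sum.delta' cong: if_cong)
  thus ?thesis using kstar_props[OF assms] by simp
qed

lemma objP_swap: "objP n m C T = (\<Sum>i<m. \<Sum>j<m. \<Sum>k<n. C i j k * T i j k)"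
  unfolding objP_def
  by (subst sum.swap, rule sum.cong, simp, subst sum.swap, simp)

theorem theorem1:
  fixes n m :: nat and \<alpha> \<beta> :: "nat \<Rightarrow> real"
    and C :: "nat \<Rightarrow> nat \<Rightarrow> nat \<Rightarrow> real" and S :: "nat \<Rightarrow> nat \<Rightarrow> real"
  assumes "n > 0" and "m > 0"
    and "\<forall>i<m. \<alpha> i \<ge> 0" and "\<forall>j<m. \<beta> j \<ge> 0"
    and "(\<Sum>i<m. \<alpha> i) = 1 / real n" and "(\<Sum>j<m. \<beta> j) = 1 / real n"
    and "\<forall>i<m. \<forall>j<m. \<forall>k<n. C i j k \<ge> 0"
    and "optS m \<alpha> \<beta> (Gmin n C) S"
  shows "optP n m \<alpha> \<beta> C (Tstar n C S)
    \<and> objP n m C (Tstar n C S) = objS m (Gmin n C) S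
    \<and> (INF T\<in>{T. feasP n m \<alpha> \<beta> T}. objP n m C T)
        = (INF S'\<in>{S'. feasS m \<alpha> \<beta> S'}. objS m (Gmin n C) S')"
proof -
  have n: "n > 0" by fact
  have fS: "feasS m \<alpha> \<beta> S" and oS: "\<And>S'. feasS m \<alpha> \<beta> S' \<Longrightarrow> objS m (Gmin n C) S \<le> objS m (Gmin n C) S'"
    using assms(8) unfolding optS_def by auto
  have fT: "feasP n m \<alpha> \<beta> (Tstar n C S)"
  proof -
    have "\<forall>i<m. \<forall>j<m. \<forall>k<n. Tstar n C S i j k \<ge> 0"
      using fS unfolding feasS_def Tstar_def by auto
    moreover have "\<forall>i<m. (\<Sum>k<n. \<Sum>j<m. Tstar n C S i j k) = \<alpha> i"
    proof (intro allI impI)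
      fix i assume "i < m"
      have "(\<Sum>k<n. \<Sum>j<m. Tstar n C S i j k) = (\<Sum>j<m. \<Sum>k<n. Tstar n C S i j k)"
        by (rule sum.swap)
      also have "\<dots> = (\<Sum>j<m. S i j)" by (simp add: sum_Tstar[OF n])
      finally show "(\<Sum>k<n. \<Sum>j<m. Tstar n C S i j k) = \<alpha> i" using fS \<open>i<m\<close> unfolding feasS_def by auto
    qed
    moreover have "\<forall>j<m. (\<Sum>k<n. \<Sum>i<m. Tstar n C S i j k) = \<beta> j"
    proof (intro allI impI)
      fix j assume "j < m"
      have "(\<Sum>k<n. \<Sum>i<m. Tstar n C S i j k) = (\<Sum>i<m. \<Sum>k<n. Tstar n C S i j k)"
        by (rule sum.swap)
      also have "\<dots> = (\<Sum>i<m. S i j)" by (simp add: sum_Tstar[OF n])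
      finally show "(\<Sum>k<n. \<Sum>i<m. Tstar n C S i j k) = \<beta> j" using fS \<open>j<m\<close> unfolding feasS_def by auto
    qed
    ultimately show ?thesis unfolding feasP_def by blast
  qed
  have objeq: "objP n m C (Tstar n C S) = objS m (Gmin n C) S"
    unfolding objP_swap objS_def by (simp add: sumC_Tstar[OF n])
  have lower: "objS m (Gmin n C) S \<le> objP n m C T" if fT': "feasP n m \<alpha> \<beta> T" for T
  proof -
    define S' where "S' i j = (\<Sum>k<n. T i j k)" for i j
    have nn: "\<forall>i<m. \<forall>j<m. \<forall>k<n. T i j k \<ge> 0" using fT' unfolding feasP_def by auto
    have "feasS m \<alpha> \<beta> S'"
    proof -
      have "\<forall>i<m. \<forall>j<m. S' i j \<ge> 0" using nn unfolding S'_def by (auto intro: sum_nonneg)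
      moreover have "\<forall>i<m. (\<Sum>j<m. S' i j) = \<alpha> i"
        using fT' unfolding feasP_def S'_def by (metis sum.swap)
      moreover have "\<forall>j<m. (\<Sum>i<m. S' i j) = \<beta> j"
        using fT' unfolding feasP_def S'_def by (metis sum.swap)
      ultimately show ?thesis unfolding feasS_def by blast
    qed
    hence "objS m (Gmin n C) S \<le> objS m (Gmin n C) S'" by (rule oS)
    also have "\<dots> \<le> objP n m C T"
      unfolding objP_swap objS_def S'_def
    proof (intro sum_mono)
      fix i j assume "i \<in> {..<m}" "j \<in> {..<m}"
      have "Gmin n C i j * (\<Sum>k<n. T i j k) = (\<Sum>k<n. Gmin n C i j * T i j k)"
        by (simp add: sum_distrib_left)
      also have "\<dots> \<le> (\<Sum>k<n. C i j k * T i j k)"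
        using nn \<open>i \<in> {..<m}\<close> \<open>j \<in> {..<m}\<close>
        by (intro sum_mono mult_right_mono Gmin_le) auto
      finally show "Gmin n C i j * (\<Sum>k<n. T i j k) \<le> (\<Sum>k<n. C i j k * T i j k)" .
    qed
    finally show ?thesis .
  qed
  have optP: "optP n m \<alpha> \<beta> C (Tstar n C S)"
    unfolding optP_def using fT lower objeq by auto
  have inf1: "(INF T\<in>{T. feasP n m \<alpha> \<beta> T}. objP n m C T) = objS m (Gmin n C) S"
    by (rule cInf_eq_minimum) (use fT objeq lower in \<open>auto intro!: image_eqI[where x="Tstar n C S"]\<close>)
  have inf2: "(INF S'\<in>{S'. feasS m \<alpha> \<beta> S'}. objS m (Gmin n C) S') = objS m (Gmin n C) S"
    by (rule cInf_eq_minimum) (use fS oS in auto)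
  show ?thesis using optP objeq inf1 inf2 by simp
qed

end
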